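(* Let $\nabla$ be a finite undirected graph (loops allowed) and $X\in\mathbb{L}(\nabla)$. If $Y_0\subsetneq Y_1\subsetneq\cdots\subsetneq Y_n=X$ is a chain of elements of $\mathbb{L}(\nabla)$, then $n$ is at most the number of equilocality classes contained in $X$ that consist of essential vertices.
   Context: For a graph $\nabla$ with vertex set $V$: $\nabla(x)$ is the set of vertices adjacent to $x$, $\nabla(X)=\bigcap_{x\in X}\nabla(x)$ (with $\nabla(\emptyset)=V$), and $\mathbb{L}(\nabla)=\{X\subseteq V:\nabla(\nabla(X))=X\}$ ordered by inclusion. Two vertices $x,y$ are equilocal if $\nabla(x)=\nabla(y)$; equivalence classes are equilocality classes, and each element of $\mathbb{L}(\nabla)$ is a union of them. An element $a$ of a lattice is (completely) meet-irreducible if $a=\bigwedge A$ for a subset $A$ implies $a\in A$; a vertex $x$ is essential if $\nabla(x)$ is meet-irreducible in $\mathbb{L}(\nabla)$ (equilocal vertices are either all essential or all not). *)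

theory Defs
  imports Main
begin

text \<open>A graph is given by a vertex set V and a symmetric adjacency relation E
  (loops allowed). All notions are relativised to V.\<close>

definition nbhd :: "'a set \<Rightarrow> ('a \<Rightarrow> 'a \<Rightarrow> bool) \<Rightarrow> 'a \<Rightarrow> 'a set" where
  "nbhd V E x = {y \<in> V. E x y}"

definition nab :: "'a set \<Rightarrow> ('a \<Rightarrow> 'a \<Rightarrow> bool) \<Rightarrow> 'a set \<Rightarrow> 'a set" where
  "nab V E X = V \<inter> (\<Inter>x\<in>X. nbhd V E x)"

definition Lat :: "'a set \<Rightarrow> ('a \<Rightarrow> 'a \<Rightarrow> bool) \<Rightarrow> 'a set set" where
  "Lat V E = {X. X \<subseteq> V \<and> nab V E (nab V E X) = X}"

definition is_meet_in :: "'a set set \<Rightarrow> 'a set set \<Rightarrow> 'a set \<Rightarrow> bool" where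
  "is_meet_in L A a \<longleftrightarrow> a \<in> L \<and> (\<forall>b\<in>A. a \<subseteq> b) \<and>
     (\<forall>c\<in>L. (\<forall>b\<in>A. c \<subseteq> b) \<longrightarrow> c \<subseteq> a)"

definition meet_irreducible_in :: "'a set set \<Rightarrow> 'a set \<Rightarrow> bool" where
  "meet_irreducible_in L a \<longleftrightarrow> a \<in> L \<and>
     (\<forall>A. A \<subseteq> L \<longrightarrow> is_meet_in L A a \<longrightarrow> a \<in> A)"

definition essential :: "'a set \<Rightarrow> ('a \<Rightarrow> 'a \<Rightarrow> bool) \<Rightarrow> 'a \<Rightarrow> bool" where
  "essential V E x \<longleftrightarrow> x \<in> V \<and> meet_irreducible_in (Lat V E) (nbhd V E x)"

definition eqclass :: "'a set \<Rightarrow> ('a \<Rightarrow> 'a \<Rightarrow> bool) \<Rightarrow> 'a \<Rightarrow> 'a set" where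
  "eqclass V E x = {y \<in> V. nbhd V E y = nbhd V E x}"

end

theory Submission
  imports Defs
begin

lemma mem_nab: "w \<in> nab V E X \<longleftrightarrow> w \<in> V \<and> (\<forall>x\<in>X. E x w)"
  by (auto simp: nab_def nbhd_def)

lemma nab_anti: "X \<subseteq> Y \<Longrightarrow> nab V E Y \<subseteq> nab V E X"
  by (auto simp: nab_def)

context
  fixes V :: "'a set" and E :: "'a \<Rightarrow> 'a \<Rightarrow> bool"
  assumes symE: "\<And>x y. E x y \<Longrightarrow> E y x"
begin


lemma nab_ext:
  assumes "X \<subseteq> V"
  shows "X \<subseteq> nab V E (nab V E X)"
  using assms symE by (auto simp: mem_nab)

lemma nab3:
  assumes "X \<subseteq> V"
  shows "nab V E (nab V E (nab V E X)) = nab V E X"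
proof
  show "nab V E (nab V E (nab V E X)) \<subseteq> nab V E X"
    by (rule nab_anti[OF nab_ext[OF assms]])
  show "nab V E X \<subseteq> nab V E (nab V E (nab V E X))"
    by (rule nab_ext) (auto simp: mem_nab)
qed

lemma nab_Lat:
  assumes "X \<subseteq> V"
  shows "nab V E X \<in> Lat V E"
  using nab3[OF assms] by (auto simp: Lat_def mem_nab)

lemma nbhd_nab: "nbhd V E y = nab V E {y}"
  by (auto simp: mem_nab nbhd_def)

lemma nbhd_Lat:
  assumes "y \<in> V"
  shows "nbhd V E y \<in> Lat V E"
  using nab_Lat[of "{y}"] assms by (simp add: nbhd_nab)

lemma Lat_inter:
  assumes "A \<subseteq> Lat V E"
  shows "V \<inter> \<Inter>A \<in> Lat V E"
proof -
  let ?C = "V \<inter> \<Inter>A"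
  have "nab V E (nab V E ?C) \<subseteq> ?C"
  proof
    fix x assume x: "x \<in> nab V E (nab V E ?C)"
    have "x \<in> V" using x by (simp add: mem_nab)
    moreover have "x \<in> b" if "b \<in> A" for b
    proof -
      have "?C \<subseteq> b" using that by blast
      hence "nab V E (nab V E ?C) \<subseteq> nab V E (nab V E b)"
        by (intro nab_anti)
      moreover have "nab V E (nab V E b) = b" using assms that by (auto simp: Lat_def)
      ultimately show ?thesis using x by blast
    qed
    ultimately show "x \<in> ?C" by blast
  qed
  moreover have "?C \<subseteq> nab V E (nab V E ?C)" using nab_ext[where X="?C"] by blast
  ultimately show ?thesis by (auto simp: Lat_def)
qed

lemma irr_nbhd:
  assumes "meet_irreducible_in (Lat V E) M"
  shows "\<exists>y\<in>nab V E M. essential V E y \<and> M = nbhd V E y"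
proof -
  have MLt: "M \<in> Lat V E" using assms by (simp add: meet_irreducible_in_def)
  hence MV: "M \<subseteq> V" and Mc: "nab V E (nab V E M) = M" by (auto simp: Lat_def)
  let ?A = "{nbhd V E y | y. y \<in> nab V E M}"
  have AL: "?A \<subseteq> Lat V E" using nbhd_Lat by (auto simp: mem_nab)
  have "is_meet_in (Lat V E) ?A M"
    unfolding is_meet_in_def
  proof (intro conjI ballI impI)
    show "M \<in> Lat V E" by fact
  next
    fix b assume "b \<in> ?A"
    then obtain y where "y \<in> nab V E M" "b = nbhd V E y" by blast
    thus "M \<subseteq> b" using MV symE by (auto simp: mem_nab nbhd_def)
  next
    fix c assume c: "c \<in> Lat V E" "\<forall>b\<in>?A. c \<subseteq> b"
    have "c \<subseteq> nab V E (nab V E M)"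
    proof
      fix x assume "x \<in> c"
      hence "x \<in> V" "\<forall>y\<in>nab V E M. x \<in> nbhd V E y" using c by (auto simp: Lat_def)
      thus "x \<in> nab V E (nab V E M)" by (auto simp: mem_nab nbhd_def)
    qed
    thus "c \<subseteq> M" using Mc by simp
  qed
  hence "M \<in> ?A" using assms AL by (auto simp: meet_irreducible_in_def)
  then obtain y where y: "y \<in> nab V E M" "M = nbhd V E y" by blast
  moreover have "essential V E y" using y assms by (auto simp: essential_def mem_nab)
  ultimately show ?thesis by blast
qed

lemma K_aux:
  assumes "finite V"
  shows "Z \<in> Lat V E \<Longrightarrow> x \<in> V \<Longrightarrow>
    (\<forall>M. meet_irreducible_in (Lat V E) M \<and> Z \<subseteq> M \<longrightarrow> x \<in> M) \<Longrightarrow> x \<in> Z"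
proof (induction "card (V - Z)" arbitrary: Z rule: less_induct)
  case less
  show ?case
  proof (cases "meet_irreducible_in (Lat V E) Z")
    case True thus ?thesis using less.prems by blast
  next
    case False
    then obtain A where A: "A \<subseteq> Lat V E" "is_meet_in (Lat V E) A Z" "Z \<notin> A"
      using less.prems(1) by (auto simp: meet_irreducible_in_def)
    have ZV: "Z \<subseteq> V" using less.prems(1) by (auto simp: Lat_def)
    have "x \<in> b" if b: "b \<in> A" for b
    proof -
      have bL: "b \<in> Lat V E" using A b by blast
      hence bV: "b \<subseteq> V" by (auto simp: Lat_def)
      have "Z \<subseteq> b" using A(2) b by (auto simp: is_meet_in_def)
      hence "Z \<subset> b" using A(3) b by blast
      hence "V - b \<subset> V - Z" using bV ZV by blast
      hence "card (V - b) < card (V - Z)" using assms by (intro psubset_card_mono) auto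
      from less.hyps[OF this bL less.prems(2)] less.prems(3) \<open>Z \<subseteq> b\<close>
      show ?thesis by blast
    qed
    hence "x \<in> V \<inter> \<Inter>A" using less.prems(2) by blast
    moreover have "V \<inter> \<Inter>A \<subseteq> Z"
      using A(2) Lat_inter[OF A(1)] by (auto simp: is_meet_in_def)
    ultimately show ?thesis by blast
  qed
qed

lemma K':
  assumes "finite V" "Z \<in> Lat V E" "x \<in> V"
    "\<And>y. y \<in> nab V E Z \<Longrightarrow> essential V E y \<Longrightarrow> E y x"
  shows "x \<in> Z"
proof -
  have "x \<in> M" if M: "meet_irreducible_in (Lat V E) M \<and> Z \<subseteq> M" for M
  proof -
  from M obtain y where y: "y \<in> nab V E M" "essential V E y" "M = nbhd V E y"
    using irr_nbhd by blast
  have "y \<in> nab V E Z" using y(1) nab_anti M by blast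
  hence "E y x" using assms(4) y(2) by blast
  thus "x \<in> M" using y(3) assms(3) by (simp add: nbhd_def)
  qed
  thus ?thesis using K_aux[OF assms(1,2,3)] by blast
qed

end


theorem mainTheorem20:
  fixes V :: "'a set" and E :: "'a \<Rightarrow> 'a \<Rightarrow> bool"
    and X :: "'a set" and Y :: "nat \<Rightarrow> 'a set" and n :: nat
  assumes "finite V"
    and "\<And>x y. E x y \<Longrightarrow> E y x"
    and "X \<in> Lat V E"
    and "\<And>i. i \<le> n \<Longrightarrow> Y i \<in> Lat V E"
    and "\<And>i. i < n \<Longrightarrow> Y i \<subset> Y (Suc i)"
    and "Y n = X"
  shows "n \<le> card {eqclass V E x | x. x \<in> X \<and> essential V E x}"
proof -
  note sym = assms(2)
  have mono: "Y i \<subseteq> Y j" if "i \<le> j" "j \<le> n" for i j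
    using that
  proof (induction j)
    case 0 thus ?case by simp
  next
    case (Suc j)
    show ?case
    proof (cases "i = Suc j")
      case True thus ?thesis by simp
    next
      case False
      hence "Y i \<subseteq> Y j" using Suc by simp
      moreover have "Y j \<subset> Y (Suc j)" using assms(5) Suc.prems by simp
      ultimately show ?thesis by blast
    qed
  qed
  have YV: "Y i \<subseteq> V" if "i \<le> n" for i using assms(4)[OF that] by (auto simp: Lat_def)
  have ex: "\<exists>y. y \<in> Y (Suc i) \<and> y \<notin> Y i \<and> essential V E y" if i: "i < n" for i
  proof (rule ccontr)
    assume H: "\<not> ?thesis"
    have Li: "Y i \<in> Lat V E" and Ls: "Y (Suc i) \<in> Lat V E" using assms(4) i by auto
    have "nab V E (Y i) \<subseteq> nab V E (Y (Suc i))"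
    proof
      fix w assume w: "w \<in> nab V E (Y i)"
      have wV: "w \<in> V" using w by (simp add: mem_nab)
      have ZL: "nab V E (Y (Suc i)) \<in> Lat V E"
        using nab_Lat[where V=V and E=E and X="Y (Suc i)", OF sym] YV i by auto
      have nn: "nab V E (nab V E (Y (Suc i))) = Y (Suc i)" using Ls by (auto simp: Lat_def)
      show "w \<in> nab V E (Y (Suc i))"
      proof (rule K'[where V=V and E=E, OF sym assms(1) ZL wV])
        fix y assume y: "y \<in> nab V E (nab V E (Y (Suc i)))" "essential V E y"
        hence "y \<in> Y i" using H nn by auto
        thus "E y w" using w by (simp add: mem_nab)
      qed
    qed
    hence "nab V E (nab V E (Y (Suc i))) \<subseteq> nab V E (nab V E (Y i))" by (rule nab_anti)
    hence "Y (Suc i) \<subseteq> Y i" using Li Ls by (auto simp: Lat_def)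
    thus False using assms(5)[OF i] by blast
  qed
  define f where "f i = eqclass V E (SOME y. y \<in> Y (Suc i) \<and> y \<notin> Y i \<and> essential V E y)" for i
  define g where "g i = (SOME y. y \<in> Y (Suc i) \<and> y \<notin> Y i \<and> essential V E y)" for i
  have g: "g i \<in> Y (Suc i) \<and> g i \<notin> Y i \<and> essential V E (g i)" if "i < n" for i
    unfolding g_def using someI_ex[OF ex[OF that]] .
  have fg: "f i = eqclass V E (g i)" for i by (simp add: f_def g_def)
  have inj: "inj_on f {..<n}"
  proof (rule inj_onI)
    have key: False if ij: "i < j" "j < n" "f i = f j" for i j
    proof -
      have gi: "g i \<in> Y (Suc i)" "essential V E (g i)" using g ij by auto
      have gj: "g j \<notin> Y j" "g j \<in> V" using g[of j] ij by (auto simp: essential_def)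
      have giV: "g i \<in> V" using gi by (simp add: essential_def)
      have "g i \<in> eqclass V E (g i)" using giV by (simp add: eqclass_def)
      hence "g i \<in> eqclass V E (g j)" using ij fg by simp
      hence nb: "nbhd V E (g i) = nbhd V E (g j)" by (simp add: eqclass_def)
      have "Y (Suc i) \<subseteq> Y j" using mono ij by simp
      hence giY: "g i \<in> Y j" using gi by blast
      have Lj: "Y j \<in> Lat V E" using assms(4) ij by simp
      hence cl: "nab V E (nab V E (Y j)) = Y j" by (simp add: Lat_def)
      have "g j \<in> nab V E (nab V E (Y j))"
      proof -
        have "E w (g j)" if "w \<in> nab V E (Y j)" for w
        proof -
          have "E (g i) w" "w \<in> V" using that giY by (auto simp: mem_nab)
          hence "w \<in> nbhd V E (g i)" by (simp add: nbhd_def)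
          hence "w \<in> nbhd V E (g j)" using nb by simp
          hence "E (g j) w" by (simp add: nbhd_def)
          thus ?thesis using sym by blast
        qed
        thus ?thesis using gj by (simp add: mem_nab)
      qed
      thus False using cl gj by simp
    qed
    fix i j assume "i \<in> {..<n}" "j \<in> {..<n}" "f i = f j"
    thus "i = j" using key[of i j] key[of j i] by (metis lessThan_iff linorder_neqE_nat)
  qed
  have sub: "f ` {..<n} \<subseteq> {eqclass V E x | x. x \<in> X \<and> essential V E x}"
  proof
    fix c assume "c \<in> f ` {..<n}"
    then obtain i where i: "i < n" "c = f i" by blast
    have "Y (Suc i) \<subseteq> X" using mono[of "Suc i" n] i assms(6) by simp
    thus "c \<in> {eqclass V E x | x. x \<in> X \<and> essential V E x}"
      using g[OF i(1)] i fg by blast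
  qed
  have fin: "finite {eqclass V E x | x. x \<in> X \<and> essential V E x}"
  proof (rule finite_subset[of _ "Pow V"])
    show "{eqclass V E x | x. x \<in> X \<and> essential V E x} \<subseteq> Pow V"
      by (auto simp: eqclass_def)
  qed (use assms(1) in simp)
  have "n = card (f ` {..<n})" using inj by (simp add: card_image)
  also have "\<dots> \<le> card {eqclass V E x | x. x \<in> X \<and> essential V E x}"
    by (rule card_mono[OF fin sub])
  finally show ?thesis .
qed

end
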